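(* Let $p>1$, $N\ge2m-1$, and let $A\in\mathbb R^{m\times N}$ be a fixed matrix all of whose $m\times m$ submatrices are invertible. Then for almost all $y\in\mathbb R^m$, the unique optimal solution $x^*$ of $\min_{x\in\mathbb R^N}\|x\|_p$ subject to $Ax=y$ satisfies $|\mathrm{supp}(x^* )|=N$.
   Context: $\|x\|_p:=(\sum_i|x_i|^p)^{1/p}$; $\mathrm{supp}(x)=\{i:x_i\ne0\}$. "For almost all" means outside a set of Lebesgue measure zero. *)

theory Defs
  imports "HOL-Analysis.Analysis"
begin

definition pnorm :: "real \<Rightarrow> real ^ 'n::finite \<Rightarrow> real" where
  "pnorm p x = (\<Sum>i\<in>UNIV. \<bar>x $ i\<bar> powr p) powr (1 / p)"

definition supp :: "real ^ 'n::finite \<Rightarrow> 'n set" where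
  "supp x = {i. x $ i \<noteq> 0}"

definition pnorm_min :: "real \<Rightarrow> real ^ 'n::finite ^ 'm::finite \<Rightarrow> real ^ 'm \<Rightarrow> real ^ 'n \<Rightarrow> bool" where
  "pnorm_min p A y x \<longleftrightarrow> A *v x = y \<and> (\<forall>z. A *v z = y \<longrightarrow> pnorm p x \<le> pnorm p z)"

end

theory Submission
  imports Defs
begin


definition psi :: "real \<Rightarrow> real \<Rightarrow> real" where "psi p t = sgn t * \<bar>t\<bar> powr (p - 1)"
definition phi :: "real \<Rightarrow> real \<Rightarrow> real" where "phi p s = sgn s * \<bar>s\<bar> powr (1 / (p - 1))"

lemma deriv_abs_powr_nz:
  assumes "s \<noteq> (0::real)"
  shows "((\<lambda>s. \<bar>s\<bar> powr r) has_real_derivative r * sgn s * \<bar>s\<bar> powr (r - 1)) (at s)"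
proof (cases "s > 0")
  case True
  have "((\<lambda>s. s powr r) has_real_derivative r * s powr (r - 1)) (at s)"
    using True by (rule has_real_derivative_powr)
  then have "((\<lambda>s. \<bar>s\<bar> powr r) has_real_derivative r * s powr (r - 1)) (at s)"
    by (rule has_field_derivative_transform_within_open[where S="{0<..}"]) (use True in auto)
  then show ?thesis using True by simp
next
  case False
  then have s: "s < 0" using assms by auto
  have "((\<lambda>s. (-s) powr r) has_real_derivative r * (-s) powr (r - 1) * (-1)) (at s)"
    using s by (auto intro!: derivative_eq_intros)
  then have "((\<lambda>s. \<bar>s\<bar> powr r) has_real_derivative r * (-s) powr (r - 1) * (-1)) (at s)"
    by (rule has_field_derivative_transform_within_open[where S="{..<0}"]) (use s in auto)
  then show ?thesis using s by simp
qed

lemma deriv_abs_powr: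
  assumes "p > 1"
  shows "((\<lambda>s. \<bar>s\<bar> powr p) has_real_derivative p * psi p s) (at s)"
proof (cases "s = 0")
  case False
  then show ?thesis using deriv_abs_powr_nz[OF False, of p] by (simp add: psi_def mult.assoc)
next
  case True
  have "((\<lambda>y. (\<bar>y\<bar> powr p - \<bar>0\<bar> powr p) / (y - 0)) \<longlongrightarrow> 0) (at 0)"
  proof (rule tendsto_norm_zero_cancel)
    have "((\<lambda>y::real. \<bar>y\<bar> powr (p - 1)) \<longlongrightarrow> \<bar>0\<bar> powr (p - 1)) (at 0)"
      using assms by (intro tendsto_intros) auto
    then have lim: "((\<lambda>y::real. \<bar>y\<bar> powr (p - 1)) \<longlongrightarrow> 0) (at 0)" by simp
    show "((\<lambda>y. norm ((\<bar>y\<bar> powr p - \<bar>0\<bar> powr p) / (y - 0))) \<longlongrightarrow> 0) (at 0)"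
    proof (rule Lim_transform_eventually[OF lim])
      show "\<forall>\<^sub>F y in at 0. \<bar>y\<bar> powr (p - 1) = norm ((\<bar>y\<bar> powr p - \<bar>0\<bar> powr p) / (y - 0))"
        unfolding eventually_at_filter
        by (auto simp: powr_diff abs_divide)
    qed
  qed
  then show ?thesis using True
    by (simp add: has_field_derivative_iff psi_def)
qed


lemma psi_zero_iff: "psi p t = 0 \<longleftrightarrow> t = 0"
  by (auto simp: psi_def sgn_if)

lemma psi_strict_mono:
  assumes "p > 1" "s < t"
  shows "psi p s < psi p t"
proof -
  have e: "p - 1 > 0" using assms by simp
  consider "0 \<le> s" | "s < 0" "0 < t" | "s < 0" "t \<le> 0" by linarith
  then show ?thesis
  proof cases
    case 1
    then have "s powr (p-1) < t powr (p-1)" using powr_less_mono2[OF e 1 assms(2)] by simp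
    then show ?thesis using 1 assms by (auto simp: psi_def sgn_if)
  next
    case 2
    have "(-s) powr (p-1) > 0" "t powr (p-1) > 0" using 2 by auto
    then have "-((-s) powr (p-1)) < t powr (p-1)" by linarith
    moreover have "psi p s = -((-s) powr (p-1))" "psi p t = t powr (p-1)" using 2 by (auto simp: psi_def)
    ultimately show ?thesis by simp
  next
    case 3
    have "(-t) powr (p-1) < (-s) powr (p-1)" using powr_less_mono2[OF e, of "-t" "-s"] 3 assms by simp
    then show ?thesis using 3 assms by (auto simp: psi_def sgn_if)
  qed
qed

lemma phi_psi:
  assumes "p > 1"
  shows "phi p (psi p t) = t"
proof -
  have "(\<bar>t\<bar> powr (p - 1)) powr (1 / (p - 1)) = \<bar>t\<bar>"
    using assms by (simp add: powr_powr)
  then show ?thesis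
    by (auto simp: phi_def psi_def sgn_if abs_mult)
qed

lemma phi_zero_iff: "phi p s = 0 \<longleftrightarrow> s = 0"
  by (auto simp: phi_def sgn_if)

lemma phi_deriv:
  assumes "s \<noteq> 0"
  shows "phi p differentiable (at s)"
proof (cases "s > 0")
  case True
  have "((\<lambda>s. s powr (1/(p-1))) has_real_derivative (1/(p-1)) * s powr (1/(p-1) - 1)) (at s)"
    using True by (rule has_real_derivative_powr)
  then have "(phi p has_real_derivative (1/(p-1)) * s powr (1/(p-1) - 1)) (at s)"
    by (rule has_field_derivative_transform_within_open[where S="{0<..}"]) (use True in \<open>auto simp: phi_def\<close>)
  then show ?thesis using real_differentiable_def by blast
next
  case False
  then have s: "s < 0" using assms by auto
  have "((\<lambda>s. - ((-s) powr (1/(p-1)))) has_real_derivative - ((1/(p-1)) * (-s) powr (1/(p-1) - 1) * (-1))) (at s)"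
    using s by (auto intro!: derivative_eq_intros)
  then have "(phi p has_real_derivative - ((1/(p-1)) * (-s) powr (1/(p-1) - 1) * (-1))) (at s)"
    by (rule has_field_derivative_transform_within_open[where S="{..<0}"]) (use s in \<open>auto simp: phi_def\<close>)
  then show ?thesis using real_differentiable_def by blast
qed

lemma midpoint_strict:
  assumes "p > 1" "a < (b::real)"
  shows "2 * \<bar>(a + b) / 2\<bar> powr p < \<bar>a\<bar> powr p + \<bar>b\<bar> powr p"
proof -
  define m where "m = (a + b) / 2"
  have am: "a < m" "m < b" using assms by (auto simp: m_def)
  obtain z1 where z1: "a < z1" "z1 < m" "\<bar>m\<bar> powr p - \<bar>a\<bar> powr p = (m - a) * (p * psi p z1)"
    using MVT2[OF am(1), of "\<lambda>s. \<bar>s\<bar> powr p" "\<lambda>s. p * psi p s"] deriv_abs_powr[OF assms(1)] by blast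
  obtain z2 where z2: "m < z2" "z2 < b" "\<bar>b\<bar> powr p - \<bar>m\<bar> powr p = (b - m) * (p * psi p z2)"
    using MVT2[OF am(2), of "\<lambda>s. \<bar>s\<bar> powr p" "\<lambda>s. p * psi p s"] deriv_abs_powr[OF assms(1)] by blast
  have "psi p z1 < psi p z2" using psi_strict_mono[OF assms(1)] z1 z2 by simp
  then have "p * psi p z1 < p * psi p z2" using assms by simp
  moreover have eq: "b - m = m - a" using am by (auto simp: m_def field_simps)
  moreover have "m - a > 0" using am by simp
  ultimately have "(m - a) * (p * psi p z1) < (m - a) * (p * psi p z2)"
    using mult_strict_left_mono by blast
  then have "(m - a) * (p * psi p z1) < (b - m) * (p * psi p z2)" unfolding eq .
  then show ?thesis using z1(3) z2(3) by (simp add: m_def)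
qed

lemma midpoint_le:
  fixes a b p :: real
  assumes "p > 1"
  shows "2 * \<bar>(a + b) / 2\<bar> powr p \<le> \<bar>a\<bar> powr p + \<bar>b\<bar> powr p"
  using midpoint_strict[of p a b] midpoint_strict[of p b a] assms
  by (cases a b rule: linorder_cases) (auto simp: add.commute)



definition FF :: "real \<Rightarrow> real ^ 'n::finite \<Rightarrow> real" where
  "FF p z = (\<Sum>i\<in>UNIV. \<bar>z $ i\<bar> powr p)"

lemma FF_nonneg: "FF p z \<ge> 0"
  unfolding FF_def by (intro sum_nonneg) auto

lemma pnorm_le_iff:
  assumes "p > 0"
  shows "pnorm p x \<le> pnorm p z \<longleftrightarrow> FF p x \<le> FF p z"
proof -
  have e: "1 / p > 0" using assms by simp
  have "pnorm p x = FF p x powr (1/p)" "pnorm p z = FF p z powr (1/p)"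
    by (simp_all add: pnorm_def FF_def)
  moreover have "FF p x \<le> FF p z \<Longrightarrow> FF p x powr (1/p) \<le> FF p z powr (1/p)"
    using powr_mono2[of "1/p" "FF p x" "FF p z"] e FF_nonneg[of p x] by simp
  moreover have "\<not> FF p x \<le> FF p z \<Longrightarrow> \<not> FF p x powr (1/p) \<le> FF p z powr (1/p)"
    using powr_less_mono2[OF e, of "FF p z" "FF p x"] FF_nonneg[of p z] by simp
  ultimately show ?thesis by metis
qed

lemma FF_cont: "p > 0 \<Longrightarrow> continuous_on UNIV (FF p :: real^'n::finite \<Rightarrow> real)"
  unfolding FF_def
  by (intro continuous_on_sum continuous_on_powr' continuous_intros) auto

lemma exists_min:
  fixes A :: "real ^ 'n::finite ^ 'm::finite"
  assumes p: "p > 1" and x0: "A *v x0 = y"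
  shows "\<exists>x. A *v x = y \<and> (\<forall>z. A *v z = y \<longrightarrow> FF p x \<le> FF p z)"
proof -
  define M where "M = FF p x0"
  define K where "K = {z. A *v z = y} \<inter> {z. FF p z \<le> M}"
  have "closed {z. A *v z = y}"
    by (auto intro!: closed_Collect_eq continuous_intros)
  moreover have "closed {z. FF p z \<le> M}"
    using p by (auto intro!: closed_Collect_le FF_cont continuous_intros)
  ultimately have cK: "closed K" unfolding K_def by auto
  have "bounded K"
    unfolding bounded_iff
  proof (intro exI ballI)
    fix z assume z: "z \<in> K"
    have ci: "\<bar>z $ i\<bar> \<le> max 1 M" for i
    proof (rule ccontr)
      assume "\<not> ?thesis"
      then have gt: "\<bar>z $ i\<bar> > 1" "\<bar>z $ i\<bar> > M" by auto
      have "\<bar>z $ i\<bar> powr 1 \<le> \<bar>z $ i\<bar> powr p"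
        using gt p by (intro powr_mono) auto
      also have "\<dots> \<le> FF p z"
        unfolding FF_def by (rule member_le_sum) auto
      also have "\<dots> \<le> M" using z by (auto simp: K_def)
      finally show False using gt by simp
    qed
    have "norm z \<le> (\<Sum>i\<in>UNIV. \<bar>z $ i\<bar>)" by (rule norm_le_l1_cart)
    also have "\<dots> \<le> (\<Sum>i\<in>(UNIV::'n set). max 1 M)" by (intro sum_mono ci)
    finally show "norm z \<le> real CARD('n) * max 1 M" by simp
  qed
  then have "compact K" using cK by (simp add: compact_eq_bounded_closed)
  moreover have "x0 \<in> K" using x0 by (simp add: K_def M_def)
  moreover have "continuous_on K (FF p)"
    using FF_cont[of p] p by (auto intro: continuous_on_subset)
  ultimately obtain x where x: "x \<in> K" "\<forall>z\<in>K. FF p x \<le> FF p z"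
    using continuous_attains_inf[of K "FF p"] by blast
  have "A *v z = y \<longrightarrow> FF p x \<le> FF p z" for z
  proof
    assume "A *v z = y"
    show "FF p x \<le> FF p z"
    proof (cases "FF p z \<le> M")
      case True then show ?thesis using x \<open>A *v z = y\<close> by (auto simp: K_def)
    next
      case False then show ?thesis using x by (auto simp: K_def)
    qed
  qed
  then show ?thesis using x by (auto simp: K_def)
qed

lemma unique_min:
  fixes A :: "real ^ 'n::finite ^ 'm::finite"
  assumes p: "p > 1"
    and x1: "A *v x1 = y" "\<forall>z. A *v z = y \<longrightarrow> FF p x1 \<le> FF p z"
    and x2: "A *v x2 = y" "\<forall>z. A *v z = y \<longrightarrow> FF p x2 \<le> FF p z"
  shows "x1 = x2"
proof (rule ccontr)
  assume ne: "x1 \<noteq> x2"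
  then obtain k where k: "x1 $ k \<noteq> x2 $ k" by (auto simp: vec_eq_iff)
  define w where "w = (1/2::real) *\<^sub>R (x1 + x2)"
  have "A *v w = y" using x1 x2 by (simp add: w_def matrix_vector_right_distrib matrix_vector_mult_scaleR)
  have "2 * FF p w = (\<Sum>i\<in>UNIV. 2 * \<bar>(x1 $ i + x2 $ i) / 2\<bar> powr p)"
    by (simp add: FF_def w_def sum_distrib_left)
  also have "\<dots> < (\<Sum>i\<in>UNIV. \<bar>x1 $ i\<bar> powr p + \<bar>x2 $ i\<bar> powr p)"
  proof (rule sum_strict_mono_ex1)
    show "\<forall>i\<in>UNIV. 2 * \<bar>(x1 $ i + x2 $ i) / 2\<bar> powr p \<le> \<bar>x1 $ i\<bar> powr p + \<bar>x2 $ i\<bar> powr p"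
      using midpoint_le[OF p] by blast
    show "\<exists>i\<in>UNIV. 2 * \<bar>(x1 $ i + x2 $ i) / 2\<bar> powr p < \<bar>x1 $ i\<bar> powr p + \<bar>x2 $ i\<bar> powr p"
      using k midpoint_strict[OF p, of "x1$k" "x2$k"] midpoint_strict[OF p, of "x2$k" "x1$k"]
      by (cases "x1 $ k < x2 $ k") (auto simp: add.commute)
  qed auto
  also have "\<dots> = FF p x1 + FF p x2" by (simp add: FF_def sum.distrib)
  finally have "2 * FF p w < FF p x1 + FF p x2" .
  moreover have "FF p x1 \<le> FF p w" "FF p x2 \<le> FF p w" using x1 x2 \<open>A *v w = y\<close> by auto
  ultimately show False by simp
qed

lemma kkt:
  fixes A :: "real ^ 'n::finite ^ 'm::finite"
  assumes p: "p > 1"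
    and x: "A *v x = y" "\<forall>z. A *v z = y \<longrightarrow> FF p x \<le> FF p z"
    and v: "A *v v = 0"
  shows "(\<Sum>i\<in>UNIV. psi p (x $ i) * v $ i) = 0"
proof -
  define g where "g t = (\<Sum>i\<in>UNIV. \<bar>x $ i + t * v $ i\<bar> powr p)" for t
  have "(g has_real_derivative (\<Sum>i\<in>UNIV. p * psi p (x $ i + 0 * v $ i) * (0 + 1 * v $ i))) (at 0)"
    unfolding g_def
    by (intro DERIV_sum DERIV_chain2[OF deriv_abs_powr[OF p]] derivative_eq_intros) auto
  then have d: "(g has_real_derivative p * (\<Sum>i\<in>UNIV. psi p (x $ i) * v $ i)) (at 0)"
    by (simp add: sum_distrib_left mult.assoc)
  have "\<forall>t. \<bar>0 - t\<bar> < 1 \<longrightarrow> g 0 \<le> g t"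
  proof (intro allI impI)
    fix t :: real
    have "A *v (x + t *\<^sub>R v) = y" using x v by (simp add: matrix_vector_right_distrib matrix_vector_mult_scaleR)
    then have "FF p x \<le> FF p (x + t *\<^sub>R v)" using x by auto
    then show "g 0 \<le> g t" by (simp add: g_def FF_def)
  qed
  from DERIV_local_min[OF d _ this] have "p * (\<Sum>i\<in>UNIV. psi p (x $ i) * v $ i) = 0" by simp
  then show ?thesis using p by simp
qed



lemma column_nonzero:
  fixes A :: "real ^ 'n::finite ^ 'm::finite"
  assumes inv: "\<forall>f :: 'm \<Rightarrow> 'n. inj f \<longrightarrow> invertible (\<chi> i j. A $ i $ f j)"
    and f0: "inj (f0 :: 'm \<Rightarrow> 'n)"
  shows "column j A \<noteq> 0"
proof
  assume col: "column j A = 0"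
  obtain k0 :: 'm where True by blast
  define f where "f k = (if k = k0 then j else if f0 k = j then f0 k0 else f0 k)" for k
  have "inj f"
    unfolding inj_def f_def using f0 by (auto simp: inj_def split: if_splits)
  then have "invertible (\<chi> i k. A $ i $ f k)" using inv by blast
  then have injB: "inj ((*v) (\<chi> i k. A $ i $ f k))" by (rule inj_matrix_vector_mult)
  have "(\<chi> i k. A $ i $ f k) *v axis k0 1 = column k0 (\<chi> i k. A $ i $ f k)"
    by (rule matrix_vector_mult_basis)
  also have "\<dots> = column j A" by (simp add: column_def f_def)
  also have "\<dots> = (\<chi> i k. A $ i $ f k) *v 0" using col by simp
  finally have "(\<chi> i k. A $ i $ f k) *v axis k0 1 = (\<chi> i k. A $ i $ f k) *v 0" .
  then have "axis k0 (1::real) = 0" using injB by (rule injD[rotated])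
  then show False by (simp add: axis_eq_0_iff)
qed


theorem corollary4p1:
  fixes p :: real and A :: "real ^ 'n ^ 'm"
  assumes "p > 1"
    and "CARD('n) \<ge> 2 * CARD('m) - 1"
    and "\<forall>f :: 'm \<Rightarrow> 'n. inj f \<longrightarrow> invertible (\<chi> i j. A $ i $ f j)"
  shows "AE y in lborel. \<exists>x. pnorm_min p A y x \<and> (\<forall>z. pnorm_min p A y z \<longrightarrow> z = x)
                              \<and> card (supp x) = CARD('n)"
proof -
  have p0: "p > 0" using assms(1) by simp
  have "CARD('m) > 0" by simp
  then have "CARD('m) \<le> CARD('n)" using assms(2) by linarith
  then obtain f0 :: "'m \<Rightarrow> 'n" where f0: "inj f0"
    using card_le_inj[of "UNIV::'m set" "UNIV::'n set"] by auto
  define B where "B = (\<chi> i k. A $ i $ f0 k)"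
  have "invertible B" using assms(3) f0 by (simp add: B_def)
  then obtain B' :: "real^'m^'m" where BB': "B ** B' = mat 1" "B' ** B = mat 1"
    unfolding invertible_def by blast
  define P :: "real^'m^'n" where "P = (\<chi> i k. if i = f0 k then 1 else 0)"
  have AP: "A ** P = B"
    by (simp add: matrix_matrix_mult_def B_def P_def vec_eq_iff if_distrib[of "\<lambda>x. _ * x"] cong: if_cong)
  have BB'z: "B *v (B' *v z) = z" for z
    by (simp add: matrix_vector_mul_assoc BB')
  have solv: "A *v (P *v (B' *v z)) = z" for z
    by (simp add: matrix_vector_mul_assoc[of A P] AP BB'z)
  define G where "G Z l = (\<Sum>j\<in>-Z. phi p (column j A \<bullet> l) *\<^sub>R column j A)" for Z l
  define S where "S Z = {l::real^'m. \<forall>j. column j A \<bullet> l = 0 \<longleftrightarrow> j \<in> Z}" for Z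
  define N where "N = \<Union> ((\<lambda>Z. G Z ` S Z) ` {Z. Z \<noteq> {}})"
  have negN: "negligible N"
    unfolding N_def
  proof (rule negligible_Union)
    show "finite ((\<lambda>Z. G Z ` S Z) ` {Z. Z \<noteq> {}})" by simp
  next
    fix T assume "T \<in> (\<lambda>Z. G Z ` S Z) ` {Z. Z \<noteq> {}}"
    then obtain Z where Z: "Z \<noteq> {}" "T = G Z ` S Z" by auto
    then obtain j where j: "j \<in> Z" by auto
    have "S Z \<subseteq> {l. column j A \<bullet> l = 0}" using j by (auto simp: S_def)
    moreover have "negligible {l. column j A \<bullet> l = 0}"
      using column_nonzero[OF assms(3) f0] by (intro negligible_hyperplane) auto
    ultimately have negS: "negligible (S Z)" by (rule negligible_subset[rotated])
    have "G Z differentiable_on S Z"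
      unfolding differentiable_on_def
    proof
      fix l assume l: "l \<in> S Z"
      have nz: "column k A \<bullet> l \<noteq> 0" if "k \<in> -Z" for k using l that by (auto simp: S_def)
      have "(\<lambda>l. \<Sum>k\<in>-Z. phi p (column k A \<bullet> l) *\<^sub>R column k A) differentiable (at l within S Z)"
      proof (rule differentiable_sum)
        show "\<forall>k\<in>-Z. (\<lambda>l. phi p (column k A \<bullet> l) *\<^sub>R column k A) differentiable (at l within S Z)"
        proof
          fix k assume k: "k \<in> -Z"
          have "(\<lambda>l. phi p (column k A \<bullet> l)) differentiable (at l within S Z)"
            by (rule differentiable_compose[of "phi p"]) (use phi_deriv nz[OF k] in auto)
          then show "(\<lambda>l. phi p (column k A \<bullet> l) *\<^sub>R column k A) differentiable (at l within S Z)"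
            by (intro differentiable_scaleR) auto
        qed
      qed simp
      then show "G Z differentiable (at l within S Z)" by (simp add: G_def[abs_def])
    qed
    then show "negligible T"
      using negligible_differentiable_image_negligible[OF order_refl negS] Z by auto
  qed
  have key: "\<exists>x. pnorm_min p A y x \<and> (\<forall>z. pnorm_min p A y z \<longrightarrow> z = x) \<and> card (supp x) = CARD('n)"
    if yN: "y \<notin> N" for y
  proof -
    obtain x where xmin: "A *v x = y" "\<forall>z. A *v z = y \<longrightarrow> FF p x \<le> FF p z"
      using exists_min[OF assms(1) solv[of y]] by blast
    have pm: "pnorm_min p A y z \<longleftrightarrow> A *v z = y \<and> (\<forall>w. A *v w = y \<longrightarrow> FF p z \<le> FF p w)" for z
    proof -
      have "pnorm p z \<le> pnorm p w \<longleftrightarrow> FF p z \<le> FF p w" for w :: "real^'n"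
        by (rule pnorm_le_iff[OF p0])
      then show ?thesis unfolding pnorm_min_def by simp
    qed
    have uniq: "\<forall>z. pnorm_min p A y z \<longrightarrow> z = x"
      using unique_min[OF assms(1) _ _ xmin] pm by blast
    have allnz: "\<forall>j. x $ j \<noteq> 0"
    proof (rule ccontr)
      assume "\<not> (\<forall>j. x $ j \<noteq> 0)"
      define Z where "Z = {j. x $ j = 0}"
      have Zne: "Z \<noteq> {}" using \<open>\<not> (\<forall>j. x $ j \<noteq> 0)\<close> by (auto simp: Z_def)
      define W where "W = (\<chi> i. psi p (x $ i))"
      define lam where "lam = (W v* P) v* B'"
      have kk: "psi p (x $ j) = column j A \<bullet> lam" for j
      proof -
        define c where "c = B' *v column j A"
        define v where "v = axis j 1 - P *v c"
        have "A *v v = A *v axis j 1 - A *v (P *v c)"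
          by (simp add: v_def matrix_vector_mult_diff_distrib)
        also have "\<dots> = 0"
          by (simp add: matrix_vector_mult_basis matrix_vector_mul_assoc[of A P] AP c_def BB'z)
        finally have Av: "A *v v = 0" .
        have "(\<Sum>i\<in>UNIV. psi p (x $ i) * v $ i) = 0" by (rule kkt[OF assms(1) xmin Av])
        then have "W \<bullet> v = 0" by (simp add: inner_vec_def W_def)
        then have "W \<bullet> axis j 1 - W \<bullet> (P *v c) = 0" by (simp add: v_def inner_diff_right)
        then have "W $ j = (W v* P) \<bullet> c" by (simp add: inner_axis dot_lmul_matrix)
        also have "\<dots> = lam \<bullet> column j A" by (simp add: c_def lam_def dot_lmul_matrix)
        finally show ?thesis by (simp add: W_def inner_commute)
      qed
      have xj: "x $ j = phi p (column j A \<bullet> lam)" for j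
        using phi_psi[OF assms(1), of "x $ j"] kk[of j] by simp
      have "lam \<in> S Z"
      proof -
        have "column j A \<bullet> lam = 0 \<longleftrightarrow> x $ j = 0" for j
          using kk[of j] psi_zero_iff[of p "x $ j"] by simp
        then show ?thesis unfolding S_def Z_def by simp
      qed
      have "y = (\<Sum>j\<in>UNIV. x $ j *\<^sub>R column j A)"
        using xmin(1) by (simp add: matrix_mult_sum scalar_mult_eq_scaleR)
      also have "\<dots> = (\<Sum>j\<in>-Z. x $ j *\<^sub>R column j A)"
        by (rule sum.mono_neutral_right) (auto simp: Z_def)
      also have "\<dots> = G Z lam" by (simp add: G_def xj)
      finally have "y \<in> N" using \<open>lam \<in> S Z\<close> Zne by (auto simp: N_def)
      then show False using yN by simp
    qed
    then have "supp x = UNIV" by (auto simp: supp_def)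
    show ?thesis
    proof (intro exI conjI)
      show "pnorm_min p A y x" using pm xmin by blast
      show "\<forall>z. pnorm_min p A y z \<longrightarrow> z = x" by (rule uniq)
      show "card (supp x) = CARD('n)" using \<open>supp x = UNIV\<close> by simp
    qed
  qed
  have "AE y in lebesgue. \<exists>x. pnorm_min p A y x \<and> (\<forall>z. pnorm_min p A y z \<longrightarrow> z = x) \<and> card (supp x) = CARD('n)"
  proof (rule AE_I'[of N])
    show "N \<in> null_sets lebesgue" using negN by (simp add: negligible_iff_null_sets)
    show "{y \<in> space lebesgue. \<not> (\<exists>x. pnorm_min p A y x \<and> (\<forall>z. pnorm_min p A y z \<longrightarrow> z = x) \<and> card (supp x) = CARD('n))} \<subseteq> N"
      using key by blast
  qed
  then show ?thesis by (simp add: AE_completion_iff)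
qed


end
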